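(* Let $P$ be a finite bounded poset (minimum $\hat{0}$, maximum $\hat{1}$) with height function $h$, and let $H$ be the maximal value of $h$. Let $\operatorname{Inc}_q(P,h)$ be the set of matrices $A$ indexed by $P\times P$ with entries in $\mathbb{Z}[q,q^{-1}]$ and $A_{x,y}=0$ unless $x\le y$, with product $A\times_q B=AD_hB$, where $D_h$ is the diagonal matrix with entries $q^{h(x)}$; this is an associative product with unit $D_h^{-1}$. Let $Z$ be the zeta matrix ($Z_{x,y}=1$ if $x\le y$, $0$ otherwise), which is invertible for $\times_q$, and let $Z^{\times_q n}$, $n\in\mathbb{Z}$, be its powers for $\times_q$. Let $\Delta_q$ act on sequences $(a_n)_{n\in\mathbb{Z}}$ by $(\Delta_q a)_n=(a_n-a_{n-1})/q^n$. Then the sequence $(Z^{\times_q n})_{n\in\mathbb{Z}}$ is annihilated by $\Delta_q^{H+1}$, and for every $n\in\mathbb{Z}$, $\mathsf{Z}_{P,h}([n]_q)$ equals the entry of index $(\hat{0},\hat{1})$ of $Z^{\times_q n}$.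
   Context: $q$ is an indeterminate; $[n]_q=(q^n-1)/(q-1)$ for $n\in\mathbb{Z}$. A height function on $P$ is $h:P\to\mathbb{N}$ with $h(x)<h(y)$ whenever $y$ covers $x$. The $q$-Zeta polynomial $\mathsf{Z}_{P,h}\in\mathbb{Q}(q)[x]$ is the unique polynomial with $\mathsf{Z}_{P,h}([n]_q)=\sum_{e_1\le\cdots\le e_{n-1}\text{ in }P}q^{h(e_1)+\cdots+h(e_{n-1})}$ for all $n\ge2$ (explicitly $\sum_{k\ge1}\sum_{c_1<\cdots<c_k}q^{\sum h(c_i)}\mathsf{E}_{(h(c_1),\dots,h(c_k))}((x-[k+1]_q)/q^{k+1})$ with $\mathsf{E}_a$ the unique polynomial with $\mathsf{E}_a([m]_q)=\sum_{m'\in\mathbb{N}^k,\sum m'_i=m}q^{\sum a_im'_i}$ for $m\ge0$); its values at other $[n]_q$ are by evaluation. *)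

theory Defs
  imports Main "HOL-Computational_Algebra.Polynomial" "HOL-Computational_Algebra.Fraction_Field"
begin

text \<open>Coefficient field Q(q): rational functions in the indeterminate q.
  Laurent polynomials Z[q,q^-1] embed into it.\<close>
type_synonym qfield = "rat poly fract"

definition qvar :: qfield where
  "qvar = Fract [:0, 1:] 1"

definition qint :: "int \<Rightarrow> qfield" where
  "qint n = (qvar powi n - 1) / (qvar - 1)"

definition covers :: "'a::order \<Rightarrow> 'a \<Rightarrow> bool" where
  "covers x y \<longleftrightarrow> x < y \<and> \<not> (\<exists>z. x < z \<and> z < y)"

definition height_fun :: "('a::order \<Rightarrow> nat) \<Rightarrow> bool" where
  "height_fun h \<longleftrightarrow> (\<forall>x y. covers x y \<longrightarrow> h x < h y)"

definition multichain_sum :: "('a::{finite,order} \<Rightarrow> nat) \<Rightarrow> nat \<Rightarrow> qfield" where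
  "multichain_sum h m =
     (\<Sum>es \<in> {es :: 'a list. length es = m \<and> sorted_wrt (\<le>) es}.
        qvar ^ sum_list (map h es))"

definition qZeta :: "('a::{finite,order} \<Rightarrow> nat) \<Rightarrow> qfield poly" where
  "qZeta h = (THE p. \<forall>n::nat. n \<ge> 2 \<longrightarrow> poly p (qint (int n)) = multichain_sum h (n - 1))"

type_synonym 'a qmat = "'a \<Rightarrow> 'a \<Rightarrow> qfield"

definition qtimes :: "('a::finite \<Rightarrow> nat) \<Rightarrow> 'a qmat \<Rightarrow> 'a qmat \<Rightarrow> 'a qmat" where
  "qtimes h A B = (\<lambda>x y. \<Sum>z\<in>UNIV. A x z * qvar ^ h z * B z y)"

definition qunit :: "('a \<Rightarrow> nat) \<Rightarrow> 'a qmat" where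
  "qunit h = (\<lambda>x y. if x = y then inverse (qvar ^ h x) else 0)"

definition zeta_mat :: "'a::order qmat" where
  "zeta_mat = (\<lambda>x y. if x \<le> y then 1 else 0)"

definition zeta_qinv :: "('a::{finite,order} \<Rightarrow> nat) \<Rightarrow> 'a qmat" where
  "zeta_qinv h = (THE B. qtimes h zeta_mat B = qunit h \<and> qtimes h B zeta_mat = qunit h)"

definition zeta_qpow :: "('a::{finite,order} \<Rightarrow> nat) \<Rightarrow> int \<Rightarrow> 'a qmat" where
  "zeta_qpow h n =
     (if n \<ge> 0 then (qtimes h zeta_mat ^^ nat n) (qunit h)
      else (qtimes h (zeta_qinv h) ^^ nat (- n)) (qunit h))"

definition qdiff :: "(int \<Rightarrow> 'a qmat) \<Rightarrow> int \<Rightarrow> 'a qmat" where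
  "qdiff a = (\<lambda>n x y. (a n x y - a (n - 1) x y) / qvar powi n)"

end

theory Submission
  imports Defs
begin

lemma qvar_pow: "qvar ^ k = Fract ([:0,1:] ^ k) 1"
  by (induction k) (auto simp: qvar_def One_fract_def)

lemma qvar_pow_eq1: "qvar ^ k = 1 \<longleftrightarrow> k = 0"
proof -
  have "qvar ^ k = 1 \<longleftrightarrow> ([:0,1:] ^ k :: rat poly) = 1"
    by (simp add: qvar_pow One_fract_def eq_fract)
  also have "\<dots> \<longleftrightarrow> k = 0"
  proof
    assume "([:0,1:] ^ k :: rat poly) = 1"
    then have "degree ([:0,1:] ^ k :: rat poly) = 0" by simp
    then show "k = 0" by (simp add: degree_power_eq)
  qed simp
  finally show ?thesis .
qed

lemma qvar_nz: "qvar \<noteq> 0"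
  using qvar_pow_eq1[of 1] by (auto simp: qvar_def Zero_fract_def eq_fract)

lemma qvar_ne1: "qvar \<noteq> 1"
  using qvar_pow_eq1[of 1] by simp

definition mmul :: "'a::finite qmat \<Rightarrow> 'a qmat \<Rightarrow> 'a qmat" where
  "mmul A B = (\<lambda>x y. \<Sum>z\<in>UNIV. A x z * B z y)"
definition mid :: "'a qmat" where "mid = (\<lambda>x y. if x = y then 1 else 0)"
definition dg :: "('a \<Rightarrow> nat) \<Rightarrow> 'a qmat" where
  "dg h = (\<lambda>x y. if x = y then qvar ^ h x else 0)"

lemma if_times: "(if P then a else 0) * b = (if P then a * b else (0::'b::mult_zero))"
  "b * (if P then a else 0) = (if P then b * a else (0::'b::mult_zero))" by auto

lemma mmul_assoc: "mmul (mmul A B) C = mmul A (mmul B C)"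
  unfolding mmul_def
  apply (rule ext, rule ext)
  apply (simp add: sum_distrib_left sum_distrib_right mult.assoc)
  apply (rule sum.swap)
  done

lemma mmul_mid_left[simp]: "mmul mid A = A"
  unfolding mmul_def mid_def by (auto simp: if_times)
lemma mmul_mid_right[simp]: "mmul A mid = A"
  unfolding mmul_def mid_def by (auto simp: if_times)

lemma qtimes_mmul: "qtimes h A B = mmul A (mmul (dg h) B)"
  unfolding qtimes_def mmul_def dg_def by (auto simp: if_times mult.assoc)

lemma dg_qunit[simp]: "mmul (dg h) (qunit h) = mid"
  unfolding mmul_def dg_def qunit_def mid_def using qvar_nz by (intro ext) (auto simp: if_times)
lemma qunit_dg[simp]: "mmul (qunit h) (dg h) = mid"
  unfolding mmul_def dg_def qunit_def mid_def using qvar_nz by (intro ext) (auto simp: if_times)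

lemma qtimes_assoc: "qtimes h (qtimes h A B) C = qtimes h A (qtimes h B C)"
  by (simp add: qtimes_mmul mmul_assoc)

lemma qunit_left[simp]: "qtimes h (qunit h) A = A"
  by (simp add: qtimes_mmul flip: mmul_assoc)
lemma qunit_right[simp]: "qtimes h A (qunit h) = A"
  by (simp add: qtimes_mmul)

lemma mmul_sum_right: "mmul A (\<lambda>x y. \<Sum>k\<in>K. f k x y) = (\<lambda>x y. \<Sum>k\<in>K. mmul A (f k) x y)"
  unfolding mmul_def by (simp add: sum_distrib_left, subst sum.swap, rule refl)
lemma mmul_sum_left: "mmul (\<lambda>x y. \<Sum>k\<in>K. f k x y) A = (\<lambda>x y. \<Sum>k\<in>K. mmul (f k) A x y)"
  unfolding mmul_def by (simp add: sum_distrib_right, subst sum.swap, rule refl)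
lemma mmul_scal_right: "mmul A (\<lambda>x y. c * B x y) = (\<lambda>x y. c * mmul A B x y)"
  unfolding mmul_def by (simp add: sum_distrib_left algebra_simps)
lemma mmul_scal_left: "mmul (\<lambda>x y. c * B x y) A = (\<lambda>x y. c * mmul B A x y)"
  unfolding mmul_def by (simp add: sum_distrib_left algebra_simps)
lemma mmul_add_left: "mmul (\<lambda>x y. A x y + B x y) C = (\<lambda>x y. mmul A C x y + mmul B C x y)"
  unfolding mmul_def by (simp add: sum.distrib algebra_simps)
lemma mmul_add_right: "mmul C (\<lambda>x y. A x y + B x y) = (\<lambda>x y. mmul C A x y + mmul C B x y)"
  unfolding mmul_def by (simp add: sum.distrib algebra_simps)

lemma hmono:
  fixes h :: "'a::{finite,order} \<Rightarrow> nat"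
  assumes "height_fun h" "x < y" shows "h x < h y"
  using assms(2)
proof (induction "card {z. x < z \<and> z < y}" arbitrary: x y rule: less_induct)
  case less
  show ?case
  proof (cases "covers x y")
    case True then show ?thesis using assms(1) by (auto simp: height_fun_def)
  next
    case False
    then obtain z where z: "x < z" "z < y" using less.prems by (auto simp: covers_def)
    have "card {w. x < w \<and> w < z} < card {w. x < w \<and> w < y}"
      by (rule psubset_card_mono) (use z in \<open>auto dest: order.strict_trans\<close>)
    then have 1: "h x < h z" using less z by blast
    have "card {w. z < w \<and> w < y} < card {w. x < w \<and> w < y}"
      by (rule psubset_card_mono) (use z in \<open>auto dest: order.strict_trans\<close>)
    then have 2: "h z < h y" using less z by blast
    from 1 2 show ?thesis by simp
  qed
qed

definition nmat :: "'a::order qmat" where "nmat = (\<lambda>x y. if x < y then 1 else 0)"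
definition npow :: "nat \<Rightarrow> 'a::{finite,order} qmat" where "npow k = (mmul nmat ^^ k) mid"

lemma npow_0[simp]: "npow 0 = mid" by (simp add: npow_def)
lemma npow_Suc: "npow (Suc k) = mmul nmat (npow k)" by (simp add: npow_def)

lemma npow_comm: "mmul nmat (npow k) = mmul (npow k :: 'a::{finite,order} qmat) nmat"
proof (induction k)
  case (Suc k)
  have "mmul nmat (npow (Suc k)) = mmul nmat (mmul (npow k :: 'a::{finite,order} qmat) nmat)" unfolding npow_Suc by (rule arg_cong[where f="mmul nmat"], rule Suc.IH)
  also have "\<dots> = mmul (npow (Suc k)) nmat" by (simp add: npow_Suc mmul_assoc)
  finally show ?case .
qed simp

lemma npow_nz:
  fixes h :: "'a::{finite,order} \<Rightarrow> nat"
  assumes "height_fun h"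
  shows "npow k x y \<noteq> 0 \<Longrightarrow> h x + k \<le> h y"
proof (induction k arbitrary: x)
  case 0 then show ?case by (auto simp: mid_def split: if_splits)
next
  case (Suc k)
  then have "(\<Sum>z\<in>UNIV. nmat x z * npow k z y) \<noteq> 0" by (simp add: npow_Suc mmul_def)
  then have "\<exists>z. nmat x z * npow k z y \<noteq> 0" by (metis (mono_tags, lifting) sum.neutral)
  then obtain z where "nmat x z * npow k z y \<noteq> 0" by blast
  then have "x < z" "npow k z y \<noteq> 0" by (auto simp: nmat_def split: if_splits)
  then show ?case using Suc.IH hmono[OF assms] by fastforce
qed

lemma npow_zero:
  fixes h :: "'a::{finite,order} \<Rightarrow> nat"
  assumes "height_fun h"
  shows "(npow (Suc (Max (range h))) :: 'a qmat) = (\<lambda>x y. 0)"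
proof (rule ext, rule ext, rule ccontr)
  fix x y :: 'a
  assume "npow (Suc (Max (range h))) x y \<noteq> 0"
  then have "h x + Suc (Max (range h)) \<le> h y" by (rule npow_nz[OF assms])
  moreover have "h y \<le> Max (range h)" by simp
  ultimately show False by simp
qed

definition mu :: "nat \<Rightarrow> 'a::{finite,order} qmat" where
  "mu H = (\<lambda>x y. \<Sum>k\<le>H. (-1)^k * npow k x y)"

lemma zeta_split: "zeta_mat = (\<lambda>x y. mid x y + nmat x y)"
  by (intro ext) (auto simp: zeta_mat_def mid_def nmat_def less_le)

lemma telescope: "(\<Sum>k\<le>H. (-1)^k * ((a k :: qfield) + a (Suc k))) = a 0 + (-1)^H * a (Suc H)"
  by (induction H) (auto simp: algebra_simps)

lemma zeta_mu:
  fixes h :: "'a::{finite,order} \<Rightarrow> nat"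
  assumes "height_fun h"
  shows "mmul zeta_mat (mu (Max (range h)) :: 'a qmat) = mid" "mmul (mu (Max (range h)) :: 'a qmat) zeta_mat = mid"
proof -
  let ?H = "Max (range h)"
  have tel: "(\<lambda>x y. \<Sum>k\<le>?H. (-1)^k * (npow k x y + npow (Suc k) x y)) = (mid :: 'a qmat)"
  proof (intro ext)
    fix x y :: 'a
    have "(\<Sum>k\<le>?H. (-1)^k * (npow k x y + npow (Suc k) x y)) = npow 0 x y + (-1)^?H * npow (Suc ?H) x y"
      by (rule telescope)
    then show "(\<Sum>k\<le>?H. (-1)^k * (npow k x y + npow (Suc k) x y)) = mid x y"
      using npow_zero[OF assms] by simp
  qed
  have "mmul zeta_mat (mu ?H) = (\<lambda>x y::'a. \<Sum>k\<le>?H. (-1)^k * (npow k x y + npow (Suc k) x y))"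
    unfolding zeta_split mu_def mmul_sum_right mmul_scal_right mmul_add_left
    by (simp add: npow_Suc)
  also have "\<dots> = mid"
    by (rule tel)
  finally show "mmul zeta_mat (mu ?H) = (mid :: 'a qmat)" .
  have "mmul (mu ?H) zeta_mat = (\<lambda>x y::'a. \<Sum>k\<le>?H. (-1)^k * (npow k x y + npow (Suc k) x y))"
    unfolding zeta_split mu_def mmul_sum_left mmul_scal_left mmul_add_right
    by (simp add: npow_Suc npow_comm)
  also have "\<dots> = mid"
    by (rule tel)
  finally show "mmul (mu ?H) zeta_mat = (mid :: 'a qmat)" .
qed

lemma qunit_dg2[simp]: "mmul (qunit h) (mmul (dg h) X) = X"
  by (simp flip: mmul_assoc)
lemma dg_qunit2[simp]: "mmul (dg h) (mmul (qunit h) X) = X"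
  by (simp flip: mmul_assoc)

definition Zinv :: "('a::{finite,order} \<Rightarrow> nat) \<Rightarrow> 'a qmat" where
  "Zinv h = mmul (qunit h) (mmul (mu (Max (range h))) (qunit h))"

lemma Zinv_props:
  fixes h :: "'a::{finite,order} \<Rightarrow> nat"
  assumes "height_fun h"
  shows "qtimes h zeta_mat (Zinv h) = qunit h" "qtimes h (Zinv h) zeta_mat = qunit h"
proof -
  show "qtimes h zeta_mat (Zinv h) = qunit h"
    unfolding qtimes_mmul Zinv_def
    by (simp add: zeta_mu[OF assms] flip: mmul_assoc)
  have "qtimes h (Zinv h) zeta_mat = mmul (qunit h) (mmul (mu (Max (range h))) zeta_mat)"
    unfolding qtimes_mmul Zinv_def by (simp add: mmul_assoc)
  also have "\<dots> = qunit h" by (simp add: zeta_mu[OF assms])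
  finally show "qtimes h (Zinv h) zeta_mat = qunit h" .
qed

lemma zeta_qinv_eq:
  fixes h :: "'a::{finite,order} \<Rightarrow> nat"
  assumes "height_fun h"
  shows "zeta_qinv h = Zinv h"
  unfolding zeta_qinv_def
proof (rule the_equality)
  show "qtimes h zeta_mat (Zinv h) = qunit h \<and> qtimes h (Zinv h) zeta_mat = qunit h"
    using Zinv_props[OF assms] by simp
  fix B assume B: "qtimes h zeta_mat B = qunit h \<and> qtimes h B zeta_mat = qunit h"
  have "B = qtimes h B (qtimes h zeta_mat (Zinv h))" using Zinv_props[OF assms] by simp
  also have "\<dots> = qtimes h (qtimes h B zeta_mat) (Zinv h)" by (simp add: qtimes_assoc)
  also have "\<dots> = Zinv h" using B by simp
  finally show "B = Zinv h" .
qed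

lemma zeta_qpow_rec:
  fixes h :: "'a::{finite,order} \<Rightarrow> nat"
  assumes "height_fun h"
  shows "zeta_qpow h n = qtimes h zeta_mat (zeta_qpow h (n - 1))"
proof (cases "n \<ge> 1")
  case True
  then have "nat n = Suc (nat (n - 1))" by simp
  then show ?thesis using True by (simp add: zeta_qpow_def)
next
  case False
  then have m: "nat (- (n - 1)) = Suc (nat (- n))" by simp
  have "zeta_qpow h (n - 1) = qtimes h (Zinv h) (zeta_qpow h n)"
  proof (cases "n = 0")
    case True then show ?thesis by (simp add: zeta_qpow_def zeta_qinv_eq[OF assms])
  next
    case False
    with \<open>\<not> n \<ge> 1\<close> have "\<not> n \<ge> 0" by simp
    then show ?thesis using m by (simp add: zeta_qpow_def zeta_qinv_eq[OF assms])
  qed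
  then have "qtimes h zeta_mat (zeta_qpow h (n - 1)) = qtimes h (qtimes h zeta_mat (Zinv h)) (zeta_qpow h n)"
    by (simp add: qtimes_assoc)
  then show ?thesis using Zinv_props[OF assms] by simp
qed

definition Eop :: "('a::{finite,order} \<Rightarrow> nat) \<Rightarrow> nat \<Rightarrow> 'a qmat \<Rightarrow> 'a qmat" where
  "Eop h j A = (\<lambda>x y. qtimes h zeta_mat A x y - qvar ^ j * A x y)"

primrec Rj :: "('a::{finite,order} \<Rightarrow> nat) \<Rightarrow> nat \<Rightarrow> nat \<Rightarrow> 'a qmat \<Rightarrow> 'a qmat" where
  "Rj h j 0 A = A"
| "Rj h j (Suc k) A = Eop h j (Rj h (Suc j) k A)"

lemma Rj_Suc_right: "Rj h j (Suc k) A = Rj h j k (Eop h (j + k) A)"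
  by (induction k arbitrary: j) simp_all

lemma qtimes_lin: "qtimes h Z (\<lambda>x y. A x y - c * B x y) = (\<lambda>x y. qtimes h Z A x y - c * qtimes h Z B x y)"
  unfolding qtimes_def by (simp add: algebra_simps sum_subtractf sum_distrib_left)

lemma Eop_lin: "Eop h j (\<lambda>x y. A x y - c * B x y) = (\<lambda>x y. Eop h j A x y - c * Eop h j B x y)"
  unfolding Eop_def qtimes_lin by (simp add: algebra_simps)

lemma Rj_lin: "Rj h j k (\<lambda>x y. A x y - c * B x y) = (\<lambda>x y. Rj h j k A x y - c * Rj h j k B x y)"
  by (induction k arbitrary: j) (simp_all add: Eop_lin)

lemma Rj_vanish:
  fixes h :: "'a::{finite,order} \<Rightarrow> nat"
  assumes hf: "height_fun h"
  shows "(\<forall>z y. j + k \<le> h z \<longrightarrow> A z y = 0) \<Longrightarrow> (\<forall>x y. j \<le> h x \<longrightarrow> Rj h j k A x y = 0)"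
proof (induction k arbitrary: j)
  case 0 then show ?case by simp
next
  case (Suc k)
  define B where "B = Rj h (Suc j) k A"
  have B0: "\<forall>x y. Suc j \<le> h x \<longrightarrow> B x y = 0"
    unfolding B_def by (rule Suc.IH) (use Suc.prems in auto)
  show ?case
  proof (intro allI impI)
    fix x y assume hx: "j \<le> h x"
    have "qtimes h zeta_mat B x y = (\<Sum>z\<in>UNIV. zeta_mat x z * qvar ^ h z * B z y)"
      by (simp add: qtimes_def)
    also have "\<dots> = zeta_mat x x * qvar ^ h x * B x y + (\<Sum>z\<in>UNIV - {x}. zeta_mat x z * qvar ^ h z * B z y)"
      by (rule sum.remove) auto
    also have "(\<Sum>z\<in>UNIV - {x}. zeta_mat x z * qvar ^ h z * B z y) = 0"
    proof (rule sum.neutral, intro ballI)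
      fix z assume "z \<in> UNIV - {x}"
      then have "z \<noteq> x" by simp
      show "zeta_mat x z * qvar ^ h z * B z y = 0"
      proof (cases "x \<le> z")
        case True
        with \<open>z \<noteq> x\<close> have "x < z" by simp
        then have "h x < h z" by (rule hmono[OF hf])
        then have "B z y = 0" using B0 hx by simp
        then show ?thesis by simp
      qed (simp add: zeta_mat_def)
    qed
    finally have "qtimes h zeta_mat B x y = qvar ^ h x * B x y" by (simp add: zeta_mat_def)
    moreover have "qvar ^ h x * B x y - qvar ^ j * B x y = 0"
    proof (cases "h x = j")
      case False then have "B x y = 0" using B0 hx by simp
      then show ?thesis by simp
    qed simp
    ultimately show "Rj h j (Suc k) A x y = 0" by (simp add: Eop_def B_def)
  qed
qed

lemma qdiff_formula:
  fixes h :: "'a::{finite,order} \<Rightarrow> nat"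
  assumes rec: "\<And>n. a n = qtimes h zeta_mat (a (n - 1))"
  shows "(qdiff ^^ k) a n = (\<lambda>x y. Rj h 0 k (a (n - int k)) x y / qvar powi (int k * n))"
proof (induction k arbitrary: n)
  case 0 then show ?case by simp
next
  case (Suc k)
  have qz: "qvar \<noteq> 0" by (rule qvar_nz)
  define A' where "A' = a (n - int (Suc k))"
  have an: "a (n - int k) = qtimes h zeta_mat A'"
    unfolding A'_def using rec[of "n - int k"] by (simp add: algebra_simps)
  have R: "Rj h 0 (Suc k) A' = (\<lambda>x y. Rj h 0 k (a (n - int k)) x y - qvar ^ k * Rj h 0 k A' x y)"
    unfolding Rj_Suc_right an Eop_def Rj_lin by simp
  have p1: "qvar powi (int k * (n - 1)) = qvar powi (int k * n) / qvar ^ k"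
    using qz by (simp add: algebra_simps power_int_diff)
  have p2: "qvar powi (int (Suc k) * n) = qvar powi (int k * n) * qvar powi n"
    using qz by (simp add: algebra_simps power_int_add)
  have A'': "n - 1 - int k = n - int (Suc k)" by simp
  show ?case
  proof (intro ext)
    fix x y
    define X where "X = Rj h 0 k (a (n - int k)) x y"
    define Y where "Y = Rj h 0 k A' x y"
    have "(qdiff ^^ Suc k) a n x y = (X / qvar powi (int k * n) - Y / qvar powi (int k * (n - 1))) / qvar powi n"
      by (simp add: qdiff_def Suc.IH X_def Y_def A'_def A'')
    also have "\<dots> = (X - qvar ^ k * Y) / qvar powi (int (Suc k) * n)"
      unfolding p1 p2 using qz by (simp add: field_simps)
    also have "\<dots> = Rj h 0 (Suc k) A' x y / qvar powi (int (Suc k) * n)"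
      by (simp only: R X_def Y_def)
    finally show "(qdiff ^^ Suc k) a n x y = Rj h 0 (Suc k) (a (n - int (Suc k))) x y / qvar powi (int (Suc k) * n)"
      by (simp add: A'_def)
  qed
qed

lemma claim1:
  fixes h :: "'a::{finite,order_bot,order_top} \<Rightarrow> nat"
  assumes hf: "height_fun h"
  shows "(qdiff ^^ (Max (range h) + 1)) (zeta_qpow h) = (\<lambda>n x y. 0)"
proof (intro ext)
  fix n x y
  have "(qdiff ^^ (Max (range h) + 1)) (zeta_qpow h) n x y
     = Rj h 0 (Max (range h) + 1) (zeta_qpow h (n - int (Max (range h) + 1))) x y / qvar powi (int (Max (range h) + 1) * n)"
    unfolding qdiff_formula[of "zeta_qpow h" h, OF zeta_qpow_rec[OF hf]] by (rule refl)
  also have "Rj h 0 (Max (range h) + 1) (zeta_qpow h (n - int (Max (range h) + 1))) x y = 0"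
  proof -
    have hz: "\<And>z. h z \<le> Max (range h)" by simp
    have "\<forall>z y. 0 + (Max (range h) + 1) \<le> h z \<longrightarrow> (zeta_qpow h (n - int (Max (range h) + 1))) z y = 0"
    proof (intro allI impI)
      fix z y assume "0 + (Max (range h) + 1) \<le> h z"
      with hz[of z] have False by linarith
      then show "zeta_qpow h (n - int (Max (range h) + 1)) z y = 0" ..
    qed
    from Rj_vanish[OF hf this] show ?thesis by simp
  qed
  finally show "(qdiff ^^ (Max (range h) + 1)) (zeta_qpow h) n x y = 0" by simp
qed

definition sdiff :: "(int \<Rightarrow> qfield) \<Rightarrow> int \<Rightarrow> qfield" where
  "sdiff f n = (f n - f (n - 1)) / qvar powi n"

lemma qdiff_sdiff: "(qdiff ^^ k) a n x y = (sdiff ^^ k) (\<lambda>m. a m x y) n"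
  by (induction k arbitrary: n) (simp_all add: qdiff_def sdiff_def)

lemma qvar_pow_ne1: "k > 0 \<Longrightarrow> qvar ^ k \<noteq> 1"
  using qvar_pow_eq1 by simp

lemma antidiff:
  fixes Q :: "qfield poly"
  obtains P where "\<And>u. poly P u - poly P (u / qvar) = u * poly Q u"
proof -
  define d where "d i = 1 - inverse (qvar ^ Suc i)" for i
  have dnz: "d i \<noteq> 0" for i
  proof
    assume "d i = 0"
    then have "inverse (qvar ^ Suc i) = 1" by (simp add: d_def)
    then have "qvar ^ Suc i = 1" by (metis inverse_1 inverse_inverse_eq)
    with qvar_pow_ne1[of "Suc i"] show False by simp
  qed
  define P where "P = (\<Sum>i\<le>degree Q. monom (coeff Q i / d i) (Suc i))"
  have "poly P u - poly P (u / qvar) = u * poly Q u" for u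
  proof -
    have "poly P u - poly P (u / qvar) = (\<Sum>i\<le>degree Q. coeff Q i / d i * u ^ Suc i - coeff Q i / d i * (u / qvar) ^ Suc i)"
      by (simp add: P_def poly_sum poly_monom sum_subtractf)
    also have "\<dots> = (\<Sum>i\<le>degree Q. u * (coeff Q i * u ^ i))"
    proof (rule sum.cong)
      fix i
      have "coeff Q i / d i * u ^ Suc i - coeff Q i / d i * (u / qvar) ^ Suc i
            = coeff Q i / d i * u ^ Suc i * d i"
      proof -
        have e: "(u / qvar) ^ Suc i = u ^ Suc i * inverse (qvar ^ Suc i)"
          by (subst power_divide, rule divide_inverse)
        show ?thesis unfolding e d_def by (simp add: right_diff_distrib mult.assoc)
      qed
      also have "\<dots> = u * (coeff Q i * u ^ i)" using dnz[of i] by (simp add: field_simps)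
      finally show "coeff Q i / d i * u ^ Suc i - coeff Q i / d i * (u / qvar) ^ Suc i = u * (coeff Q i * u ^ i)" .
    qed simp
    also have "\<dots> = u * poly Q u" by (simp add: poly_altdef sum_distrib_left)
    finally show ?thesis .
  qed
  then show ?thesis by (rule that)
qed

lemma sdiff_poly:
  "(sdiff ^^ k) f = (\<lambda>_. 0) \<Longrightarrow> \<exists>P. \<forall>n. f n = poly P (qvar powi n)"
proof (induction k arbitrary: f)
  case 0
  then have "f n = poly 0 (qvar powi n)" for n by (simp add: fun_eq_iff)
  then show ?case by blast
next
  case (Suc k)
  have qz: "qvar \<noteq> 0" by (rule qvar_nz)
  have "(sdiff ^^ k) (sdiff f) = (\<lambda>_. 0)" using Suc.prems by (simp only: funpow_Suc_right o_apply)
  then obtain Q where Q: "\<And>n. sdiff f n = poly Q (qvar powi n)" using Suc.IH by blast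
  obtain P0 where P0: "\<And>u. poly P0 u - poly P0 (u / qvar) = u * poly Q u" using antidiff[of Q] by blast
  define g where "g n = f n - poly P0 (qvar powi n)" for n
  have gstep: "g n = g (n - 1)" for n
  proof -
    have "f n - f (n - 1) = qvar powi n * poly Q (qvar powi n)"
      using Q[of n] qz by (simp add: sdiff_def field_simps)
    moreover have "qvar powi (n - 1) = qvar powi n / qvar" using qz by (simp add: power_int_diff)
    ultimately show ?thesis using P0[of "qvar powi n"] by (simp add: g_def algebra_simps)
  qed
  have "g n = g 0" for n
  proof (induction n rule: int_induct[where k=0])
    case base then show ?case by simp
  next
    case (step1 i) then show ?case using gstep[of "i + 1"] by simp
  next
    case (step2 i) then show ?case using gstep[of i] by simp
  qed
  then have "f n = poly (P0 + [:g 0:]) (qvar powi n)" for n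
    by (simp add: g_def) (metis g_def add.commute diff_add_cancel)
  then show ?case by blast
qed

definition cset :: "'a::order \<Rightarrow> 'a \<Rightarrow> nat \<Rightarrow> 'a list set" where
  "cset x y m = {es. length es = m \<and> sorted_wrt (\<le>) (x # es @ [y])}"

definition cs :: "('a::{finite,order} \<Rightarrow> nat) \<Rightarrow> 'a \<Rightarrow> 'a \<Rightarrow> nat \<Rightarrow> qfield" where
  "cs h x y m = (\<Sum>es\<in>cset x y m. qvar ^ sum_list (map h es))"

lemma finite_cset: "finite (cset (x::'a::{finite,order}) y m)"
proof -
  have "cset x y m \<subseteq> {es. set es \<subseteq> UNIV \<and> length es = m}" by (auto simp: cset_def)
  moreover have "finite {es::'a list. set es \<subseteq> UNIV \<and> length es = m}"
    by (rule finite_lists_length_eq) simp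
  ultimately show ?thesis by (rule finite_subset)
qed

lemma sorted_cons2: "sorted_wrt (\<le>) (x # z # l) \<longleftrightarrow> (x::'a::order) \<le> z \<and> sorted_wrt (\<le>) (z # l)"
  by (auto intro: order_trans)

lemma cset_Suc: "cset x y (Suc m) = (\<lambda>(z, es). z # es) ` (SIGMA z:{z. x \<le> z}. cset z y m)"
proof (intro equalityI subsetI)
  fix es assume "es \<in> cset x y (Suc m)"
  then obtain z es' where "es = z # es'" "length es' = m" "sorted_wrt (\<le>) (x # z # es' @ [y])"
    by (cases es) (auto simp: cset_def)
  then show "es \<in> (\<lambda>(z, es). z # es) ` (SIGMA z:{z. x \<le> z}. cset z y m)"
    unfolding sorted_cons2 by (auto simp: cset_def)
next
  fix es assume "es \<in> (\<lambda>(z, es). z # es) ` (SIGMA z:{z. x \<le> z}. cset z y m)"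
  then obtain z es' where "es = z # es'" "x \<le> z" "es' \<in> cset z y m" by auto
  then show "es \<in> cset x y (Suc m)"
    using sorted_cons2[of x z "es' @ [y]"] by (auto simp: cset_def)
qed

lemma cs_0: "cs h x y 0 = zeta_mat x y"
proof -
  have "cset x y 0 = (if x \<le> y then {[]} else {})" by (auto simp: cset_def)
  then show ?thesis by (simp add: cs_def zeta_mat_def)
qed

lemma cs_Suc: "cs h x y (Suc m) = (\<Sum>z\<in>UNIV. zeta_mat x z * qvar ^ h z * cs h z y m)"
proof -
  have inj: "inj_on (\<lambda>(z, es). z # es) (SIGMA z:{z. x \<le> z}. cset z y m)"
    by (auto simp: inj_on_def)
  have "cs h x y (Suc m) = (\<Sum>p\<in>(SIGMA z:{z. x \<le> z}. cset z y m). qvar ^ sum_list (map h (fst p # snd p)))"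
    unfolding cs_def cset_Suc by (subst sum.reindex[OF inj]) (simp add: case_prod_beta)
  also have "\<dots> = (\<Sum>z\<in>{z. x \<le> z}. \<Sum>es\<in>cset z y m. qvar ^ h z * qvar ^ sum_list (map h es))"
    by (subst sum.Sigma) (auto simp: finite_cset power_add case_prod_beta)
  also have "\<dots> = (\<Sum>z\<in>{z. x \<le> z}. qvar ^ h z * cs h z y m)"
    by (simp add: cs_def sum_distrib_left)
  also have "\<dots> = (\<Sum>z\<in>UNIV. zeta_mat x z * qvar ^ h z * cs h z y m)"
  proof -
    have "(\<Sum>z\<in>UNIV. zeta_mat x z * qvar ^ h z * cs h z y m) = (\<Sum>z\<in>UNIV. if x \<le> z then qvar ^ h z * cs h z y m else 0)"
      by (rule sum.cong) (auto simp: zeta_mat_def)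
    also have "\<dots> = (\<Sum>z\<in>{z. x \<le> z}. qvar ^ h z * cs h z y m)"
      by (simp add: sum.If_cases)
    finally show ?thesis by simp
  qed
  finally show ?thesis .
qed

lemma zeta_qpow_nat: "(qtimes h zeta_mat ^^ Suc m) (qunit h) x y = cs h x y m"
proof (induction m arbitrary: x)
  case 0 then show ?case by (simp add: cs_0)
next
  case (Suc m)
  have "(qtimes h zeta_mat ^^ Suc (Suc m)) (qunit h) x y
      = (\<Sum>z\<in>UNIV. zeta_mat x z * qvar ^ h z * (qtimes h zeta_mat ^^ Suc m) (qunit h) z y)"
    by (simp only: funpow.simps o_apply) (simp add: qtimes_def)
  also have "\<dots> = (\<Sum>z\<in>UNIV. zeta_mat x z * qvar ^ h z * cs h z y m)"
    by (simp only: Suc.IH)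
  finally show ?case by (simp add: cs_Suc)
qed

lemma cs_bot_top: "cs h (bot::'a::{finite,order_bot,order_top}) top m = multichain_sum h m"
proof -
  have "cset (bot::'a) top m = {es. length es = m \<and> sorted_wrt (\<le>) es}"
    by (auto simp: cset_def sorted_wrt_append)
  then show ?thesis by (simp add: cs_def multichain_sum_def)
qed

lemma qpow_inj: "qvar ^ n = qvar ^ m \<Longrightarrow> n = m"
proof (rule ccontr)
  assume e: "qvar ^ n = qvar ^ m" and ne: "n \<noteq> m"
  have key: "qvar ^ a = qvar ^ b \<Longrightarrow> a < b \<Longrightarrow> False" for a b
  proof -
    assume "qvar ^ a = qvar ^ b" "a < b"
    moreover have "a + (b - a) = b" using \<open>a < b\<close> by simp
    ultimately have "qvar ^ a * qvar ^ (b - a) = qvar ^ a * 1" by (metis power_add mult_1_right)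
    then have "qvar ^ (b - a) = 1" using qvar_nz by simp
    with \<open>a < b\<close> qvar_pow_ne1[of "b - a"] show False by simp
  qed
  from ne have "n < m \<or> m < n" by arith
  then show False using key e by metis
qed

lemma qint_inj: "qint (int n) = qint (int m) \<Longrightarrow> n = m"
proof -
  assume "qint (int n) = qint (int m)"
  then have "(qvar ^ n - 1) / (qvar - 1) = (qvar ^ m - 1) / (qvar - 1)" by (simp add: qint_def)
  then have "qvar ^ n = qvar ^ m" using qvar_ne1 by (simp add: divide_cancel_right)
  then show "n = m" by (rule qpow_inj)
qed

lemma qpowi_qint: "qvar powi n = 1 + (qvar - 1) * qint n"
  using qvar_ne1 by (simp add: qint_def)

theorem mainTheorem9:
  fixes h :: "'a::{finite, order_bot, order_top} \<Rightarrow> nat"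
  assumes "height_fun h"
  defines "H \<equiv> Max (range h)"
  shows "(qdiff ^^ (H + 1)) (zeta_qpow h) = (\<lambda>n x y. 0)
         \<and> (\<forall>n::int. poly (qZeta h) (qint n) = zeta_qpow h n bot top)"
proof -
  note hf = assms(1)
  have C1: "(qdiff ^^ (H + 1)) (zeta_qpow h) = (\<lambda>n x y. 0)"
    unfolding H_def by (rule claim1[OF hf])
  define f where "f n = zeta_qpow h n bot top" for n
  have "(sdiff ^^ (H + 1)) f = (\<lambda>_. 0)"
  proof
    fix n
    have "(sdiff ^^ (H + 1)) f n = (qdiff ^^ (H + 1)) (zeta_qpow h) n bot top"
      unfolding qdiff_sdiff f_def by (rule refl)
    then show "(sdiff ^^ (H + 1)) f n = 0" using C1 by simp
  qed
  then obtain P where P: "\<And>n. f n = poly P (qvar powi n)" using sdiff_poly by blast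
  define p where "p = pcompose P [:1, qvar - 1:]"
  have pf: "poly p (qint n) = f n" for n
    by (simp add: p_def poly_pcompose P qpowi_qint algebra_simps)
  have pm: "poly p (qint (int n)) = multichain_sum h (n - 1)" if n2: "n \<ge> 2" for n
  proof -
    obtain m where m: "n = Suc m" using n2 by (cases n) auto
    have "poly p (qint (int n)) = (qtimes h zeta_mat ^^ Suc m) (qunit h) bot top"
      unfolding pf f_def zeta_qpow_def m by (simp only: nat_int if_True of_nat_0_le_iff)
    also have "\<dots> = multichain_sum h m" by (simp only: zeta_qpow_nat cs_bot_top)
    finally show ?thesis by (simp add: m)
  qed
  have "qZeta h = p"
    unfolding qZeta_def
  proof (rule the_equality)
    show "\<forall>n::nat. n \<ge> 2 \<longrightarrow> poly p (qint (int n)) = multichain_sum h (n - 1)"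
      using pm by blast
    fix p' assume p': "\<forall>n::nat. n \<ge> 2 \<longrightarrow> poly p' (qint (int n)) = multichain_sum h (n - 1)"
    show "p' = p"
    proof (rule ccontr)
      assume "p' \<noteq> p"
      then have "p' - p \<noteq> 0" by simp
      then have fin: "finite {x. poly (p' - p) x = 0}" by (rule poly_roots_finite)
      have sub: "(\<lambda>n. qint (int n)) ` {n. n \<ge> 2} \<subseteq> {x. poly (p' - p) x = 0}"
        using p' pm by auto
      have inj: "inj_on (\<lambda>n. qint (int n)) {n. n \<ge> 2}"
        by (auto simp: inj_on_def dest: qint_inj)
      have "finite {n::nat. n \<ge> 2}"
        using finite_imageD[OF finite_subset[OF sub fin] inj] .
      moreover have "infinite {n::nat. n \<ge> 2}"
        by (simp add: infinite_nat_iff_unbounded_le) (meson le_cases)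
      ultimately show False by simp
    qed
  qed
  then have C2: "\<forall>n::int. poly (qZeta h) (qint n) = zeta_qpow h n bot top"
    using pf by (simp add: f_def)
  from C1 C2 show ?thesis by blast
qed

end
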